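(* For every $X\in\mathcal{W}_4^3$ and every $0\le j\le 2$, $\tilde H_j(X;\mathbb{Z})=0$.
   Context: $\mathbb{I}_n$ is the hypercube graph on $\{0,1\}^n$ with Hamming distance; $\mathcal{VR}(G;3)$ is the simplicial complex of vertex sets of pairwise Hamming distance $\le 3$. For distinct $j_1,\dots,j_t\in[n]$ and $\epsilon_1,\dots,\epsilon_t\in\{0,1\}$, $\mathbb{I}_n^{(j_1,\epsilon_1),\dots,(j_t,\epsilon_t)}$ is the induced subgraph on $\{v: v(j_l)=\epsilon_l,\ 1\le l\le t\}$; an $m$-dimensional cube subgraph is one of these with $t=n-m$ (with $t=0$ giving $\mathbb{I}_n$). For such $H$ and $\lambda\notin\{j_1,\dots,j_t\}$, $\epsilon\in\{0,1\}$, $H^{(\lambda,\epsilon)}$ is the induced subgraph of $H$ on vertices with $v(\lambda)=\epsilon$, and $\partial(\mathcal{VR}(H;3))=\bigcup_{\lambda\notin\{j_l\},\epsilon}\mathcal{VR}(H^{(\lambda,\epsilon)};3)$. For $n\ge4$ and $3\le m\le n$, $\mathcal{W}_n^m$ is the collection of all finite unions $X=X_1\cup\dots\cup X_k$ ($k\ge1$) such that: each $X_j=\mathcal{VR}(H_j;3)$ for some $m$-dimensional cube subgraph $H_j$ of $\mathbb{I}_n$; and if $m\ne n$, then $X\subseteq\mathcal{VR}(H;3)$ for some $(m+1)$-dimensional cube subgraph $H=\mathbb{I}_n^{(j_1,\epsilon_1),\dots,(j_{n-m-1},\epsilon_{n-m-1})}$, and moreover if $X\ne\partial(\mathcal{VR}(H;3))$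 then there exist $\lambda\in[n]\setminus\{j_1,\dots,j_{n-m-1}\}$ and $\epsilon\in\{0,1\}$ with $\mathcal{VR}(H^{(\lambda,\epsilon)};3)\subseteq X$ and $\mathcal{VR}(H^{(\lambda,1-\epsilon)};3)\not\subseteq X$. $\tilde H_j$ is reduced simplicial homology. *)

theory Defs
  imports Main
begin

text \<open>Vertices of the hypercube I_n are encoded as natural numbers v < 2^n;
  coordinate j (0 \<le> j < n) of v is bit v j.\<close>

definition hamming :: "nat \<Rightarrow> nat \<Rightarrow> nat \<Rightarrow> nat" where
  "hamming n a b = card {j. j < n \<and> bit a j \<noteq> bit b j}"

text \<open>A cube subgraph is specified by a set F of pairs (coordinate, fixed value)
  with distinct coordinates in [n]; it is m-dimensional iff card F = n - m.\<close>

definition cube_spec :: "nat \<Rightarrow> nat \<Rightarrow> (nat \<times> bool) set \<Rightarrow> bool" where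
  "cube_spec n m F \<longleftrightarrow> m \<le> n \<and> finite F \<and> fst ` F \<subseteq> {..<n} \<and> inj_on fst F \<and> card F = n - m"

definition subcube :: "nat \<Rightarrow> (nat \<times> bool) set \<Rightarrow> nat set" where
  "subcube n F = {v. v < 2 ^ n \<and> (\<forall>(j, e) \<in> F. bit v j = e)}"

definition VR :: "nat \<Rightarrow> nat \<Rightarrow> nat set \<Rightarrow> nat set set" where
  "VR n d V = {\<sigma>. \<sigma> \<noteq> {} \<and> finite \<sigma> \<and> \<sigma> \<subseteq> V \<and> (\<forall>a\<in>\<sigma>. \<forall>b\<in>\<sigma>. hamming n a b \<le> d)}"

definition cube_boundary :: "nat \<Rightarrow> (nat \<times> bool) set \<Rightarrow> nat set set" where
  "cube_boundary n F = \<Union> {VR n 3 (subcube n (insert (l, e) F)) | l e. l < n \<and> l \<notin> fst ` F}"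

definition W :: "nat \<Rightarrow> nat \<Rightarrow> nat set set set" where
  "W n m = {X. \<exists>S. finite S \<and> S \<noteq> {} \<and> (\<forall>F\<in>S. cube_spec n m F)
     \<and> X = (\<Union>F\<in>S. VR n 3 (subcube n F))
     \<and> (m \<noteq> n \<longrightarrow> (\<exists>G. cube_spec n (m + 1) G \<and> X \<subseteq> VR n 3 (subcube n G)
           \<and> (X \<noteq> cube_boundary n G \<longrightarrow>
               (\<exists>l e. l < n \<and> l \<notin> fst ` G
                  \<and> VR n 3 (subcube n (insert (l, e) G)) \<subseteq> X
                  \<and> \<not> VR n 3 (subcube n (insert (l, \<not> e) G)) \<subseteq> X))))}"

text \<open>An integer j-chain is a function on simplices supported on the j-simplices
  (vertex sets of cardinality j+1); the empty set plays the role of the unique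
  (-1)-simplex, so the boundary of a 0-chain evaluated at the empty set is the
  augmentation. Vertices are ordered by the order on nat, and the face obtained
  by deleting the vertex v gets sign (-1)^(number of vertices below v).\<close>

definition chains :: "nat set set \<Rightarrow> nat \<Rightarrow> (nat set \<Rightarrow> int) set" where
  "chains K j = {c. \<forall>\<sigma>. c \<sigma> \<noteq> 0 \<longrightarrow> \<sigma> \<in> K \<and> card \<sigma> = Suc j}"

definition bd :: "nat set set \<Rightarrow> (nat set \<Rightarrow> int) \<Rightarrow> nat set \<Rightarrow> int" where
  "bd K c \<tau> = (\<Sum>\<sigma> \<in> {\<sigma> \<in> K. \<tau> \<subseteq> \<sigma> \<and> card \<sigma> = Suc (card \<tau>)}.
      (-1) ^ card {x \<in> \<sigma>. x < the_elem (\<sigma> - \<tau>)} * c \<sigma>)"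

definition reduced_cycles :: "nat set set \<Rightarrow> nat \<Rightarrow> (nat set \<Rightarrow> int) set" where
  "reduced_cycles K j = {c \<in> chains K j. bd K c = (\<lambda>_. 0)}"

definition reduced_boundaries :: "nat set set \<Rightarrow> nat \<Rightarrow> (nat set \<Rightarrow> int) set" where
  "reduced_boundaries K j = bd K ` chains K (Suc j)"

definition reduced_homology_vanishes :: "nat set set \<Rightarrow> nat \<Rightarrow> bool" where
  "reduced_homology_vanishes K j \<longleftrightarrow> reduced_cycles K j = reduced_boundaries K j"

end

theory Submission
  imports Defs
begin

definition cof :: "nat set set \<Rightarrow> nat set \<Rightarrow> nat set set" where
  "cof K \<tau> = {\<sigma> \<in> K. \<tau> \<subseteq> \<sigma> \<and> card \<sigma> = Suc (card \<tau>)}"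

definition sg :: "nat set \<Rightarrow> nat set \<Rightarrow> int" where
  "sg \<sigma> \<tau> = (-1) ^ card {x \<in> \<sigma>. x < the_elem (\<sigma> - \<tau>)}"

lemma bd_alt: "bd K c \<tau> = (\<Sum>\<sigma>\<in>cof K \<tau>. sg \<sigma> \<tau> * c \<sigma>)"
  unfolding bd_def cof_def sg_def by simp

definition cplx :: "nat set set \<Rightarrow> bool" where
  "cplx K \<longleftrightarrow> finite K \<and> (\<forall>\<sigma>\<in>K. \<sigma> \<noteq> {} \<and> finite \<sigma>) \<and> (\<forall>\<sigma>\<in>K. \<forall>\<tau>. \<tau> \<subseteq> \<sigma> \<and> \<tau> \<noteq> {} \<longrightarrow> \<tau> \<in> K)"

lemma cplx_fin: "cplx K \<Longrightarrow> finite K"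
  and cplx_el: "cplx K \<Longrightarrow> \<sigma> \<in> K \<Longrightarrow> \<sigma> \<noteq> {} \<and> finite \<sigma>"
  and cplx_down: "cplx K \<Longrightarrow> \<sigma> \<in> K \<Longrightarrow> \<tau> \<subseteq> \<sigma> \<Longrightarrow> \<tau> \<noteq> {} \<Longrightarrow> \<tau> \<in> K"
  unfolding cplx_def by blast+

lemma cof_finite: "finite K \<Longrightarrow> finite (cof K \<tau>)"
  unfolding cof_def by simp

lemma bd_support:
  assumes "\<And>\<sigma>. c \<sigma> \<noteq> 0 \<Longrightarrow> card \<sigma> = Suc j" and "bd K c \<tau> \<noteq> 0"
  shows "card \<tau> = j \<and> (\<exists>\<sigma>\<in>K. \<tau> \<subseteq> \<sigma> \<and> c \<sigma> \<noteq> 0)"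
proof -
  from assms(2) obtain \<sigma> where "\<sigma> \<in> cof K \<tau>" "sg \<sigma> \<tau> * c \<sigma> \<noteq> 0"
    unfolding bd_alt by (meson sum.not_neutral_contains_not_neutral)
  then show ?thesis using assms(1)[of \<sigma>] unfolding cof_def by auto
qed

lemma bd_chains:
  assumes "cplx K" "c \<in> chains K (Suc j)"
  shows "bd K c \<in> chains K j"
  unfolding chains_def mem_Collect_eq
proof (intro allI impI)
  fix \<tau> assume "bd K c \<tau> \<noteq> 0"
  from bd_support[OF _ this, of "Suc j"] assms(2)
  obtain \<sigma> where s: "card \<tau> = Suc j" "\<sigma> \<in> K" "\<tau> \<subseteq> \<sigma>" unfolding chains_def by auto
  then have "\<tau> \<noteq> {}" by auto
  with s cplx_down[OF assms(1)] show "\<tau> \<in> K \<and> card \<tau> = Suc j" by blast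
qed

lemma bd_restrict:
  assumes "K' \<subseteq> K" "finite K" "\<And>\<sigma>. c \<sigma> \<noteq> 0 \<Longrightarrow> \<sigma> \<in> K'"
  shows "bd K c = bd K' c"
proof
  fix \<tau>
  have "(\<Sum>\<sigma>\<in>cof K \<tau>. sg \<sigma> \<tau> * c \<sigma>) = (\<Sum>\<sigma>\<in>cof K' \<tau>. sg \<sigma> \<tau> * c \<sigma>)"
    apply (rule sum.mono_neutral_right)
    using assms by (auto simp: cof_def)
  then show "bd K c \<tau> = bd K' c \<tau>" by (simp add: bd_alt)
qed

lemma bd_add: "bd K (\<lambda>\<sigma>. c \<sigma> + d \<sigma>) = (\<lambda>\<tau>. bd K c \<tau> + bd K d \<tau>)"
  by (auto simp: bd_alt sum.distrib algebra_simps)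

lemma bd_diff: "bd K (\<lambda>\<sigma>. c \<sigma> - d \<sigma>) = (\<lambda>\<tau>. bd K c \<tau> - bd K d \<tau>)"
  by (auto simp: bd_alt sum_subtractf algebra_simps)

lemma card_ins_less:
  assumes "finite A" "x \<notin> A"
  shows "card {z \<in> insert x A. z < (y::nat)} = card {z \<in> A. z < y} + (if x < y then 1 else 0)"
proof -
  have "{z \<in> insert x A. z < y} = (if x < y then insert x {z \<in> A. z < y} else {z \<in> A. z < y})"
    by auto
  then show ?thesis using assms by auto
qed

lemma bdbd_local:
  assumes "cplx K" "\<sigma> \<in> K"
  shows "(\<Sum>\<tau>\<in>{\<tau> \<in> cof K \<rho>. \<sigma> \<in> cof K \<tau>}. sg \<tau> \<rho> * sg \<sigma> \<tau>) = 0"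
proof (cases "{\<tau> \<in> cof K \<rho>. \<sigma> \<in> cof K \<tau>} = {}")
  case True then show ?thesis by (simp only: sum.empty)
next
  case False
  then obtain \<tau>0 where t0: "\<tau>0 \<in> cof K \<rho>" "\<sigma> \<in> cof K \<tau>0" by blast
  have fs: "finite \<sigma>" using assms cplx_el by blast
  have sub: "\<rho> \<subseteq> \<tau>0" "\<tau>0 \<subseteq> \<sigma>" "card \<tau>0 = Suc (card \<rho>)" "card \<sigma> = Suc (card \<tau>0)"
    using t0 unfolding cof_def by simp_all
  have fr: "finite \<rho>" using sub(1,2) fs by (meson finite_subset order_trans)
  have rs: "\<rho> \<subseteq> \<sigma>" using sub(1,2) by (rule order_trans)
  have "card (\<sigma> - \<rho>) = card \<sigma> - card \<rho>" using fr rs by (rule card_Diff_subset)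
  then have "card (\<sigma> - \<rho>) = 2" using sub(3,4) by simp
  then obtain x0 y0 where xy0: "\<sigma> - \<rho> = {x0, y0}" "x0 \<noteq> y0" by (meson card_2_iff)
  obtain x y where xy: "\<sigma> - \<rho> = {x, y}" "x < y"
  proof (cases "x0 < y0")
    case True then show ?thesis using that xy0 by blast
  next
    case False then have "y0 < x0" using xy0 by simp
    then show ?thesis using that[of y0 x0] xy0 by (simp add: insert_commute)
  qed
  have xr: "x \<notin> \<rho>" "y \<notin> \<rho>" "x \<in> \<sigma>" "y \<in> \<sigma>" using xy by auto
  have sig: "\<sigma> = insert x (insert y \<rho>)" using xy rs by auto
  have cs: "card \<sigma> = Suc (Suc (card \<rho>))" using sub by simp
  have K1: "insert x \<rho> \<in> K" "insert y \<rho> \<in> K"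
    using cplx_down[OF assms] xr rs by auto
  have M: "{\<tau> \<in> cof K \<rho>. \<sigma> \<in> cof K \<tau>} = {insert x \<rho>, insert y \<rho>}"
  proof (intro equalityI subsetI)
    fix \<tau> assume "\<tau> \<in> {\<tau> \<in> cof K \<rho>. \<sigma> \<in> cof K \<tau>}"
    then have t: "\<rho> \<subseteq> \<tau>" "\<tau> \<subseteq> \<sigma>" "card \<tau> = Suc (card \<rho>)" unfolding cof_def by auto
    then have ft: "finite \<tau>" using fs finite_subset by blast
    have "card (\<tau> - \<rho>) = 1" using t fr ft by (simp add: card_Diff_subset)
    then obtain z where z: "\<tau> - \<rho> = {z}" using card_1_singletonE by blast
    then have "z \<in> \<sigma> - \<rho>" using t by auto
    moreover have "\<tau> = insert z \<rho>" using z t by auto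
    ultimately show "\<tau> \<in> {insert x \<rho>, insert y \<rho>}" using xy by auto
  next
    fix \<tau> assume "\<tau> \<in> {insert x \<rho>, insert y \<rho>}"
    then show "\<tau> \<in> {\<tau> \<in> cof K \<rho>. \<sigma> \<in> cof K \<tau>}"
      using K1 xr fr cs assms(2) sig unfolding cof_def by auto
  qed
  have neq: "insert x \<rho> \<noteq> insert y \<rho>" using xr xy by auto
  have e1: "insert x \<rho> - \<rho> = {x}" "insert y \<rho> - \<rho> = {y}" using xr by auto
  have e2: "\<sigma> - insert x \<rho> = {y}" "\<sigma> - insert y \<rho> = {x}" using sig xr xy by auto
  have c1: "card {z \<in> insert x \<rho>. z < x} = card {z \<in> \<rho>. z < x}"
    using card_ins_less[OF fr xr(1), of x] by simp
  have c2: "card {z \<in> insert y \<rho>. z < y} = card {z \<in> \<rho>. z < y}"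
    using card_ins_less[OF fr xr(2), of y] by simp
  have c3: "card {z \<in> \<sigma>. z < y} = Suc (card {z \<in> \<rho>. z < y})"
    using card_ins_less[of "insert y \<rho>" x y] card_ins_less[OF fr xr(2), of y] fr xr xy sig by simp
  have c4: "card {z \<in> \<sigma>. z < x} = card {z \<in> \<rho>. z < x}"
    using card_ins_less[of "insert y \<rho>" x x] card_ins_less[OF fr xr(2), of x] fr xr xy sig by simp
  have s1: "sg (insert x \<rho>) \<rho> * sg \<sigma> (insert x \<rho>) = - ((-1) ^ card {z \<in> \<rho>. z < x} * (-1) ^ card {z \<in> \<rho>. z < y})"
    unfolding sg_def e1 e2 the_elem_eq c1 c3 by simp
  have s2: "sg (insert y \<rho>) \<rho> * sg \<sigma> (insert y \<rho>) = ((-1) ^ card {z \<in> \<rho>. z < x} * (-1) ^ card {z \<in> \<rho>. z < y})"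
    unfolding sg_def e1 e2 the_elem_eq c2 c4 by simp
  have "(\<Sum>\<tau>\<in>{insert x \<rho>, insert y \<rho>}. sg \<tau> \<rho> * sg \<sigma> \<tau>) = 
     sg (insert x \<rho>) \<rho> * sg \<sigma> (insert x \<rho>) + (\<Sum>\<tau>\<in>{insert y \<rho>}. sg \<tau> \<rho> * sg \<sigma> \<tau>)"
    by (rule sum.insert) (use neq in auto)
  then show ?thesis unfolding M using s1 s2 by simp
qed

lemma bdbd:
  assumes "cplx K"
  shows "bd K (bd K c) \<rho> = 0"
proof -
  have fK: "finite K" using assms cplx_fin by blast
  have ce: "\<And>\<tau>. cof K \<tau> = {\<sigma> \<in> K. \<sigma> \<in> cof K \<tau>}" unfolding cof_def by auto
  have "bd K (bd K c) \<rho> = (\<Sum>\<tau>\<in>cof K \<rho>. \<Sum>\<sigma>\<in>{\<sigma> \<in> K. \<sigma> \<in> cof K \<tau>}. sg \<tau> \<rho> * (sg \<sigma> \<tau> * c \<sigma>))"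
    unfolding bd_alt sum_distrib_left by (simp only: ce[symmetric])
  also have "\<dots> = (\<Sum>\<sigma>\<in>K. \<Sum>\<tau>\<in>{\<tau> \<in> cof K \<rho>. \<sigma> \<in> cof K \<tau>}. sg \<tau> \<rho> * (sg \<sigma> \<tau> * c \<sigma>))"
    by (rule sum.swap_restrict) (use fK cof_finite in auto)
  also have "\<dots> = (\<Sum>\<sigma>\<in>K. (\<Sum>\<tau>\<in>{\<tau> \<in> cof K \<rho>. \<sigma> \<in> cof K \<tau>}. sg \<tau> \<rho> * sg \<sigma> \<tau>) * c \<sigma>)"
    by (simp add: sum_distrib_right mult.assoc)
  also have "\<dots> = 0" using bdbd_local[OF assms] by simp
  finally show ?thesis .
qed

lemma sg_single:
  assumes "\<tau> - \<tau>0 = {e}" "\<And>z. z \<in> \<tau> \<Longrightarrow> e \<le> z"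
  shows "sg \<tau> \<tau>0 = 1"
proof -
  have "{x \<in> \<tau>. x < the_elem (\<tau> - \<tau>0)} = {}" using assms by force
  then show ?thesis unfolding sg_def by (simp only: card.empty power_0)
qed

lemma cone_ZB:
  assumes K: "cplx K" and cw: "\<And>\<sigma>. \<sigma> \<in> K \<Longrightarrow> insert w \<sigma> \<in> K"
    and mw: "\<And>\<sigma> z. \<sigma> \<in> K \<Longrightarrow> z \<in> \<sigma> \<Longrightarrow> w \<le> z"
    and c: "c \<in> reduced_cycles K j"
  shows "c \<in> reduced_boundaries K j"
proof -
  have cz: "bd K c = (\<lambda>_. 0)" using c unfolding reduced_cycles_def by blast
  have supp: "\<And>\<sigma>. c \<sigma> \<noteq> 0 \<Longrightarrow> \<sigma> \<in> K \<and> card \<sigma> = Suc j"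
    using c unfolding reduced_cycles_def chains_def by blast
  have fK: "finite K" using K cplx_fin by blast
  define h where "h = (\<lambda>\<rho>. if w \<in> \<rho> then c (\<rho> - {w}) else 0)"
  have hch: "h \<in> chains K (Suc j)"
    unfolding chains_def mem_Collect_eq
  proof (intro allI impI)
    fix \<rho> assume "h \<rho> \<noteq> 0"
    then have w: "w \<in> \<rho>" and c0: "c (\<rho> - {w}) \<noteq> 0" unfolding h_def by (auto split: if_splits)
    from supp[OF c0] have r1: "\<rho> - {w} \<in> K" "card (\<rho> - {w}) = Suc j" by auto
    have "\<rho> = insert w (\<rho> - {w})" using w by blast
    then have "\<rho> \<in> K" using cw[OF r1(1)] by simp
    moreover have "finite (\<rho> - {w})" using r1(2) by (metis card.infinite nat.simps(3))
    then have "finite \<rho>" by simp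
    ultimately show "\<rho> \<in> K \<and> card \<rho> = Suc (Suc j)"
      using card_Suc_Diff1[of \<rho> w] w r1(2) by simp
  qed
  have "bd K h = c"
  proof
    fix \<tau>
    show "bd K h \<tau> = c \<tau>"
    proof (cases "w \<in> \<tau>")
      case False
      have zero: "h \<sigma> = 0" if "\<sigma> \<in> cof K \<tau>" "\<sigma> \<noteq> insert w \<tau>" for \<sigma>
      proof (rule ccontr)
        assume "h \<sigma> \<noteq> 0"
        then have ws: "w \<in> \<sigma>" unfolding h_def by (auto split: if_splits)
        from that have s: "\<sigma> \<in> K" "\<tau> \<subseteq> \<sigma>" "card \<sigma> = Suc (card \<tau>)" unfolding cof_def by simp_all
        have fs: "finite \<sigma>" using s(1) K cplx_el by blast
        have ft: "finite \<tau>" using fs s(2) finite_subset by blast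
        have "insert w \<tau> \<subseteq> \<sigma>" using ws s(2) by blast
        moreover have "card (insert w \<tau>) = card \<sigma>" using ft False s(3) by simp
        ultimately have "insert w \<tau> = \<sigma>" using card_subset_eq[OF fs] by blast
        then show False using that(2) by simp
      qed
      show ?thesis
      proof (cases "insert w \<tau> \<in> cof K \<tau>")
        case True
        have "bd K h \<tau> = (\<Sum>\<sigma>\<in>{insert w \<tau>}. sg \<sigma> \<tau> * h \<sigma>)"
          unfolding bd_alt
          by (rule sum.mono_neutral_right) (use cof_finite[OF fK] True zero in auto)
        also have "\<dots> = sg (insert w \<tau>) \<tau> * c \<tau>" unfolding h_def using False by simp
        also have "sg (insert w \<tau>) \<tau> = 1"
        proof (rule sg_single)
          show "insert w \<tau> - \<tau> = {w}" using False by blast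
          have "insert w \<tau> \<in> K" using True unfolding cof_def by simp
          then show "\<And>z. z \<in> insert w \<tau> \<Longrightarrow> w \<le> z" using mw by blast
        qed
        finally show ?thesis by simp
      next
        case nc: False
        have ct: "c \<tau> = 0"
        proof (rule ccontr)
          assume "c \<tau> \<noteq> 0"
          from supp[OF this] have t: "\<tau> \<in> K" "card \<tau> = Suc j" by auto
          then have "finite \<tau>" by (metis card.infinite nat.simps(3))
          then have "insert w \<tau> \<in> cof K \<tau>" using cw[OF t(1)] False unfolding cof_def by (simp add: subset_insertI)
          then show False using nc by simp
        qed
        have "bd K h \<tau> = 0" unfolding bd_alt
          by (rule sum.neutral) (use zero nc in fastforce)
        then show ?thesis using ct by simp
      qed
    next
      case True
      show ?thesis
      proof (cases "finite \<tau>")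
        case False
        then have "c \<tau> = 0" using supp by (metis card.infinite nat.simps(3))
        moreover have "cof K \<tau> = {}"
        proof -
          have "\<not> (\<sigma> \<in> cof K \<tau>)" for \<sigma>
          proof
            assume "\<sigma> \<in> cof K \<tau>"
            then have "\<sigma> \<in> K" "\<tau> \<subseteq> \<sigma>" unfolding cof_def by simp_all
            then show False using False K cplx_el finite_subset by blast
          qed
          then show ?thesis by blast
        qed
        ultimately show ?thesis unfolding bd_alt by simp
      next
        case ft: True
        define \<tau>0 where "\<tau>0 = \<tau> - {w}"
        have t0: "\<tau> = insert w \<tau>0" "w \<notin> \<tau>0" "finite \<tau>0" using True ft unfolding \<tau>0_def by auto
        have ct0: "card \<tau> = Suc (card \<tau>0)" using t0 by simp
        define C0 where "C0 = {\<sigma>' \<in> cof K \<tau>0. w \<notin> \<sigma>'}"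
        have A: "bd K h \<tau> = (\<Sum>\<sigma>'\<in>C0. sg (insert w \<sigma>') \<tau> * c \<sigma>')"
          unfolding bd_alt
        proof (rule sym, rule sum.reindex_bij_witness[where i = "\<lambda>\<sigma>. \<sigma> - {w}" and j = "insert w"])
          fix a assume a: "a \<in> C0"
          then have a1: "a \<in> K" "\<tau>0 \<subseteq> a" "card a = Suc (card \<tau>0)" "w \<notin> a"
            unfolding C0_def cof_def by simp_all
          have fa: "finite a" using a1(1) K cplx_el by blast
          show "insert w a - {w} = a" using a1(4) by simp
          show "insert w a \<in> cof K \<tau>"
            unfolding cof_def using cw[OF a1(1)] a1 fa t0(1) ct0 by auto
          show "sg (insert w a) \<tau> * h (insert w a) = sg (insert w a) \<tau> * c a"
            unfolding h_def using a1(4) by simp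
        next
          fix b assume b: "b \<in> cof K \<tau>"
          then have b1: "b \<in> K" "\<tau> \<subseteq> b" "card b = Suc (card \<tau>)" unfolding cof_def by simp_all
          have fb: "finite b" using b1(1) K cplx_el by blast
          have wb: "w \<in> b" using b1(2) True by blast
          show "insert w (b - {w}) = b" using wb by blast
          have "card (b - {w}) = Suc (card \<tau>0)" using b1(3) ct0 card_Suc_Diff1[OF fb wb] by simp
          moreover have "b - {w} \<noteq> {}" using calculation by (metis card.empty nat.simps(3))
          moreover have "b - {w} \<in> K" using cplx_down[OF K b1(1) _ calculation(2)] by blast
          moreover have "\<tau>0 \<subseteq> b - {w}" using b1(2) t0 by blast
          ultimately show "b - {w} \<in> C0" unfolding C0_def cof_def by simp
        qed
        have B: "sg (insert w \<sigma>') \<tau> = - sg \<sigma>' \<tau>0" if "\<sigma>' \<in> C0" for \<sigma>'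
        proof -
          from that have a1: "\<sigma>' \<in> K" "\<tau>0 \<subseteq> \<sigma>'" "card \<sigma>' = Suc (card \<tau>0)" "w \<notin> \<sigma>'"
            unfolding C0_def cof_def by simp_all
          have fa: "finite \<sigma>'" using a1(1) K cplx_el by blast
          have "card (\<sigma>' - \<tau>0) = 1" using a1(2,3) t0(3) by (simp add: card_Diff_subset)
          then obtain e where e: "\<sigma>' - \<tau>0 = {e}" using card_1_singletonE by blast
          have eq: "insert w \<sigma>' - \<tau> = \<sigma>' - \<tau>0" using t0(1) a1(4) by blast
          have "e \<in> \<sigma>'" using e by blast
          then have we: "w < e" using mw[OF a1(1)] a1(4) by (metis order_le_neq_trans)
          have "card {z \<in> insert w \<sigma>'. z < e} = Suc (card {z \<in> \<sigma>'. z < e})"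
            using card_ins_less[OF fa a1(4), of e] we by simp
          then show ?thesis unfolding sg_def eq e the_elem_eq by simp
        qed
        have C: "bd K c \<tau>0 = (\<Sum>\<sigma>'\<in>C0. sg \<sigma>' \<tau>0 * c \<sigma>') + c \<tau>"
        proof -
          have "bd K c \<tau>0 = (\<Sum>\<sigma>'\<in>cof K \<tau>0 \<inter> {\<sigma>'. w \<notin> \<sigma>'}. sg \<sigma>' \<tau>0 * c \<sigma>')
              + (\<Sum>\<sigma>'\<in>cof K \<tau>0 - {\<sigma>'. w \<notin> \<sigma>'}. sg \<sigma>' \<tau>0 * c \<sigma>')"
            unfolding bd_alt by (rule sum.Int_Diff) (rule cof_finite[OF fK])
          moreover have "cof K \<tau>0 \<inter> {\<sigma>'. w \<notin> \<sigma>'} = C0" unfolding C0_def by blast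
          moreover have "(\<Sum>\<sigma>'\<in>cof K \<tau>0 - {\<sigma>'. w \<notin> \<sigma>'}. sg \<sigma>' \<tau>0 * c \<sigma>') = c \<tau>"
          proof (cases "\<tau> \<in> K")
            case tK: True
            have "cof K \<tau>0 - {\<sigma>'. w \<notin> \<sigma>'} = {\<tau>}"
            proof (intro equalityI subsetI)
              fix s assume "s \<in> cof K \<tau>0 - {\<sigma>'. w \<notin> \<sigma>'}"
              then have s1: "s \<in> K" "\<tau>0 \<subseteq> s" "card s = Suc (card \<tau>0)" "w \<in> s"
                unfolding cof_def by simp_all
              have fs: "finite s" using s1(1) K cplx_el by blast
              have "\<tau> \<subseteq> s" using s1 t0(1) by blast
              then have "\<tau> = s" using card_subset_eq[OF fs] s1(3) ct0 by simp
              then show "s \<in> {\<tau>}" by simp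
            next
              fix s assume "s \<in> {\<tau>}"
              then show "s \<in> cof K \<tau>0 - {\<sigma>'. w \<notin> \<sigma>'}" using tK t0 ct0 unfolding cof_def by auto
            qed
            moreover have "sg \<tau> \<tau>0 = 1"
            proof (rule sg_single)
              show "\<tau> - \<tau>0 = {w}" using t0 by blast
              show "\<And>z. z \<in> \<tau> \<Longrightarrow> w \<le> z" using mw[OF tK] by blast
            qed
            ultimately show ?thesis by simp
          next
            case False
            then have "c \<tau> = 0" using supp by blast
            moreover have sr: "\<And>s. s \<in> cof K \<tau>0 - {\<sigma>'. w \<notin> \<sigma>'} \<Longrightarrow> s = \<tau>"
            proof -
              fix s assume "s \<in> cof K \<tau>0 - {\<sigma>'. w \<notin> \<sigma>'}"
              then have s1: "s \<in> K" "\<tau>0 \<subseteq> s" "card s = Suc (card \<tau>0)" "w \<in> s"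
                unfolding cof_def by simp_all
              have fs: "finite s" using s1(1) K cplx_el by blast
              have "\<tau> \<subseteq> s" using s1 t0(1) by blast
              then show "s = \<tau>" using card_subset_eq[OF fs] s1(3) ct0 by (metis)
            qed
            moreover have "cof K \<tau>0 - {\<sigma>'. w \<notin> \<sigma>'} = {}"
            proof (rule equals0I)
              fix s assume a: "s \<in> cof K \<tau>0 - {\<sigma>'. w \<notin> \<sigma>'}"
              then have "s \<in> K" unfolding cof_def by blast
              then show False using sr[OF a] False by blast
            qed
            ultimately show ?thesis by (simp only: sum.empty)
          qed
          ultimately show ?thesis by simp
        qed
        have "(\<Sum>\<sigma>'\<in>C0. sg (insert w \<sigma>') \<tau> * c \<sigma>') = - (\<Sum>\<sigma>'\<in>C0. sg \<sigma>' \<tau>0 * c \<sigma>')"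
          using B by (simp add: sum_negf[symmetric])
        then show ?thesis using A C cz by (metis add.commute add_eq_0_iff)
      qed
    qed
  qed
  then show ?thesis unfolding reduced_boundaries_def using hch by (metis image_eqI)
qed

definition ZB :: "nat set set \<Rightarrow> nat \<Rightarrow> bool" where
  "ZB K j \<longleftrightarrow> reduced_cycles K j \<subseteq> reduced_boundaries K j"

lemma B_sub_Z: assumes "cplx K" shows "reduced_boundaries K j \<subseteq> reduced_cycles K j"
proof
  fix y assume "y \<in> reduced_boundaries K j"
  then obtain c where c: "c \<in> chains K (Suc j)" "y = bd K c" unfolding reduced_boundaries_def by blast
  have "y \<in> chains K j" using bd_chains[OF \<open>cplx K\<close> c(1)] c(2) by simp
  moreover have "bd K y = (\<lambda>_. 0)" using bdbd[OF \<open>cplx K\<close>, of c] c(2) by blast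
  ultimately show "y \<in> reduced_cycles K j" unfolding reduced_cycles_def by blast
qed

lemma rhv_ZB: "cplx K \<Longrightarrow> ZB K j \<Longrightarrow> reduced_homology_vanishes K j"
  unfolding reduced_homology_vanishes_def ZB_def using B_sub_Z[of K j] by (metis subset_antisym)

lemma cplxI:
  assumes "finite K" "\<And>\<sigma>. \<sigma> \<in> K \<Longrightarrow> \<sigma> \<noteq> {} \<and> finite \<sigma>"
    "\<And>\<sigma> \<tau>. \<sigma> \<in> K \<Longrightarrow> \<tau> \<subseteq> \<sigma> \<Longrightarrow> \<tau> \<noteq> {} \<Longrightarrow> \<tau> \<in> K"
  shows "cplx K"
  unfolding cplx_def using assms by blast

lemma cplx_Un: assumes "cplx K1" "cplx K2" shows "cplx (K1 \<union> K2)"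
proof (rule cplxI)
  show "finite (K1 \<union> K2)" using assms cplx_fin by blast
  show "\<And>\<sigma>. \<sigma> \<in> K1 \<union> K2 \<Longrightarrow> \<sigma> \<noteq> {} \<and> finite \<sigma>" using assms cplx_el by blast
  fix \<sigma> \<tau> assume "\<sigma> \<in> K1 \<union> K2" "\<tau> \<subseteq> \<sigma>" "\<tau> \<noteq> {}"
  then show "\<tau> \<in> K1 \<union> K2" using cplx_down[OF assms(1)] cplx_down[OF assms(2)] by blast
qed

lemma cplx_Int: assumes "cplx K1" "cplx K2" shows "cplx (K1 \<inter> K2)"
proof (rule cplxI)
  show "finite (K1 \<inter> K2)" using assms cplx_fin by blast
  show "\<And>\<sigma>. \<sigma> \<in> K1 \<inter> K2 \<Longrightarrow> \<sigma> \<noteq> {} \<and> finite \<sigma>" using assms cplx_el by blast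
  fix \<sigma> \<tau> assume "\<sigma> \<in> K1 \<inter> K2" "\<tau> \<subseteq> \<sigma>" "\<tau> \<noteq> {}"
  then show "\<tau> \<in> K1 \<inter> K2" using cplx_down[OF assms(1)] cplx_down[OF assms(2)] by blast
qed



lemma chainsD: "c \<in> chains K j \<Longrightarrow> c \<sigma> \<noteq> 0 \<Longrightarrow> \<sigma> \<in> K \<and> card \<sigma> = Suc j"
  unfolding chains_def by blast

lemma chainsI: "(\<And>\<sigma>. c \<sigma> \<noteq> 0 \<Longrightarrow> \<sigma> \<in> K \<and> card \<sigma> = Suc j) \<Longrightarrow> c \<in> chains K j"
  unfolding chains_def by blast

lemma MV:
  assumes K1: "cplx K1" and K2: "cplx K2" and Z1: "ZB K1 j" and Z2: "ZB K2 j"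
    and j0: "j = 0 \<Longrightarrow> K1 \<inter> K2 \<noteq> {}"
    and js: "\<And>i. j = Suc i \<Longrightarrow> ZB (K1 \<inter> K2) i"
  shows "ZB (K1 \<union> K2) j"
  unfolding ZB_def
proof
  fix z assume zc: "z \<in> reduced_cycles (K1 \<union> K2) j"
  define K where "K = K1 \<union> K2"
  have K: "cplx K" unfolding K_def using K1 K2 by (rule cplx_Un)
  have fK: "finite K" using K cplx_fin by blast
  have zch: "z \<in> chains K j" and zz: "bd K z = (\<lambda>_. 0)"
    using zc unfolding reduced_cycles_def K_def by blast+
  define z1 where "z1 = (\<lambda>\<sigma>. if \<sigma> \<in> K1 then z \<sigma> else 0)"
  define z2 where "z2 = (\<lambda>\<sigma>. z \<sigma> - z1 \<sigma>)"
  have z1c: "z1 \<in> chains K1 j"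
    by (rule chainsI) (use chainsD[OF zch] in \<open>auto simp: z1_def split: if_splits\<close>)
  have z2c: "z2 \<in> chains K2 j"
    by (rule chainsI) (use chainsD[OF zch] in \<open>auto simp: z2_def z1_def K_def split: if_splits\<close>)
  define y where "y = bd K z1"
  have y1: "bd K1 z1 = y" unfolding y_def
    by (rule bd_restrict[symmetric]) (use fK chainsD[OF z1c] in \<open>auto simp: K_def\<close>)
  have zsplit: "z = (\<lambda>\<sigma>. z1 \<sigma> + z2 \<sigma>)" unfolding z2_def by simp
  have y2: "bd K2 z2 = (\<lambda>\<tau>. - y \<tau>)"
  proof -
    have "bd K2 z2 = bd K z2"
      by (rule bd_restrict[symmetric]) (use fK chainsD[OF z2c] in \<open>auto simp: K_def\<close>)
    moreover have "(\<lambda>\<tau>. bd K z1 \<tau> + bd K z2 \<tau>) = (\<lambda>_. 0)"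
      using zz zsplit bd_add[of K z1 z2] by metis
    ultimately show ?thesis unfolding y_def by (metis add_eq_0_iff)
  qed
  obtain b where bc: "b \<in> chains (K1 \<inter> K2) j" and b1: "bd K1 b = y" and b2: "bd K2 b = y"
  proof (cases j)
    case (Suc i)
    have yc1: "y \<in> chains K1 i" using bd_chains[OF K1, of z1 i] z1c y1 Suc by simp
    have "bd K2 z2 \<in> chains K2 i" using bd_chains[OF K2, of z2 i] z2c Suc by simp
    then have yc2: "y \<in> chains K2 i" unfolding y2 chains_def by simp
    have yc: "y \<in> chains (K1 \<inter> K2) i"
      by (rule chainsI) (use chainsD[OF yc1] chainsD[OF yc2] in blast)
    have "bd (K1 \<inter> K2) y = bd K y"
      by (rule bd_restrict[symmetric]) (use fK chainsD[OF yc] in \<open>auto simp: K_def\<close>)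
    also have "\<dots> = (\<lambda>_. 0)" unfolding y_def using bdbd[OF K] by blast
    finally have "y \<in> reduced_cycles (K1 \<inter> K2) i" using yc unfolding reduced_cycles_def by blast
    then have "y \<in> reduced_boundaries (K1 \<inter> K2) i" using js[OF Suc] unfolding ZB_def by blast
    then obtain b where bc: "b \<in> chains (K1 \<inter> K2) (Suc i)" and yb: "y = bd (K1 \<inter> K2) b"
      unfolding reduced_boundaries_def by blast
    have fK1: "finite K1" "finite K2" using K1 K2 cplx_fin by blast+
    have "bd K1 b = y" unfolding yb
      by (rule bd_restrict) (use fK1 chainsD[OF bc] in auto)
    moreover have "bd K2 b = y" unfolding yb
      by (rule bd_restrict) (use fK1 chainsD[OF bc] in auto)
    ultimately show ?thesis using that bc Suc by blast
  next
    case 0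
    then obtain \<sigma> where "\<sigma> \<in> K1 \<inter> K2" using j0 by blast
    then obtain v where v: "{v} \<in> K1" "{v} \<in> K2"
      using K1 K2 cplx_el cplx_down by (metis IntD1 IntD2 empty_not_insert ex_in_conv insert_subsetI empty_subsetI)
    define a where "a = y {}"
    define b where "b = (\<lambda>\<sigma>. if \<sigma> = {v} then a else 0)"
    have bc: "b \<in> chains (K1 \<inter> K2) 0"
      by (rule chainsI) (use v in \<open>auto simp: b_def split: if_splits\<close>)
    have yz: "y \<tau> = 0" if "\<tau> \<noteq> {}" for \<tau>
    proof (rule ccontr)
      assume "y \<tau> \<noteq> 0"
      then have "card \<tau> = 0 \<and> (\<exists>\<sigma>\<in>K1. \<tau> \<subseteq> \<sigma> \<and> z1 \<sigma> \<noteq> 0)"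
        using bd_support[of z1 0 K1 \<tau>] chainsD[OF z1c] y1 0 by auto
      then show False using that K1 cplx_el finite_subset by (metis card_0_eq)
    qed
    have bb: "bd L b = y" if L: "cplx L" "{v} \<in> L" for L
    proof
      fix \<tau>
      show "bd L b \<tau> = y \<tau>"
      proof (cases "\<tau> = {}")
        case True
        have fL: "finite L" using L cplx_fin by blast
        have "bd L b {} = (\<Sum>\<sigma>\<in>{{v}}. sg \<sigma> {} * b \<sigma>)"
          unfolding bd_alt
          by (rule sum.mono_neutral_right) (use cof_finite[OF fL, of "{}"] L(2) in \<open>auto simp: cof_def b_def\<close>)
        also have "\<dots> = sg {v} {} * a" by (simp add: b_def)
        also have "sg {v} {} = 1" by (rule sg_single) auto
        finally show ?thesis using True a_def by simp
      next
        case False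
        have "bd L b \<tau> = 0"
        proof (rule ccontr)
          assume "bd L b \<tau> \<noteq> 0"
          then have "card \<tau> = 0 \<and> (\<exists>\<sigma>\<in>L. \<tau> \<subseteq> \<sigma> \<and> b \<sigma> \<noteq> 0)"
            using bd_support[of b 0 L \<tau>] chainsD[OF bc] by auto
          then show False using False L cplx_el finite_subset by (metis card_0_eq)
        qed
        then show ?thesis using yz[OF False] by simp
      qed
    qed
    show ?thesis using that[OF _ bb[OF K1 v(1)] bb[OF K2 v(2)]] bc 0 by blast
  qed
  have bK1: "b \<in> chains K1 j" "b \<in> chains K2 j" using chainsD[OF bc] by (auto intro!: chainsI)
  define u1 where "u1 = (\<lambda>\<sigma>. z1 \<sigma> - b \<sigma>)"
  define u2 where "u2 = (\<lambda>\<sigma>. z2 \<sigma> + b \<sigma>)"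
  have "u1 \<in> reduced_cycles K1 j"
  proof -
    have "u1 \<in> chains K1 j" unfolding u1_def
    proof (rule chainsI)
      fix \<sigma> assume "z1 \<sigma> - b \<sigma> \<noteq> 0"
      then have "z1 \<sigma> \<noteq> 0 \<or> b \<sigma> \<noteq> 0" by linarith
      then show "\<sigma> \<in> K1 \<and> card \<sigma> = Suc j" using chainsD[OF z1c] chainsD[OF bK1(1)] by blast
    qed
    moreover have "bd K1 u1 = (\<lambda>_. 0)" unfolding u1_def bd_diff y1 b1 by simp
    ultimately show ?thesis unfolding reduced_cycles_def by blast
  qed
  then obtain a1 where a1: "a1 \<in> chains K1 (Suc j)" "u1 = bd K1 a1"
    using Z1 unfolding ZB_def reduced_boundaries_def by blast
  have "u2 \<in> reduced_cycles K2 j"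
  proof -
    have "u2 \<in> chains K2 j" unfolding u2_def
    proof (rule chainsI)
      fix \<sigma> assume "z2 \<sigma> + b \<sigma> \<noteq> 0"
      then have "z2 \<sigma> \<noteq> 0 \<or> b \<sigma> \<noteq> 0" by linarith
      then show "\<sigma> \<in> K2 \<and> card \<sigma> = Suc j" using chainsD[OF z2c] chainsD[OF bK1(2)] by blast
    qed
    moreover have "bd K2 u2 = (\<lambda>_. 0)" unfolding u2_def bd_add y2 b2 by simp
    ultimately show ?thesis unfolding reduced_cycles_def by blast
  qed
  then obtain a2 where a2: "a2 \<in> chains K2 (Suc j)" "u2 = bd K2 a2"
    using Z2 unfolding ZB_def reduced_boundaries_def by blast
  define a where "a = (\<lambda>\<sigma>. a1 \<sigma> + a2 \<sigma>)"
  have ac: "a \<in> chains K (Suc j)" unfolding a_def K_def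
  proof (rule chainsI)
    fix \<sigma> assume "a1 \<sigma> + a2 \<sigma> \<noteq> 0"
    then have "a1 \<sigma> \<noteq> 0 \<or> a2 \<sigma> \<noteq> 0" by linarith
    then show "\<sigma> \<in> K1 \<union> K2 \<and> card \<sigma> = Suc (Suc j)" using chainsD[OF a1(1)] chainsD[OF a2(1)] by blast
  qed
  have "bd K a1 = bd K1 a1"
    by (rule bd_restrict) (use fK chainsD[OF a1(1)] in \<open>auto simp: K_def\<close>)
  moreover have "bd K a2 = bd K2 a2"
    by (rule bd_restrict) (use fK chainsD[OF a2(1)] in \<open>auto simp: K_def\<close>)
  ultimately have "bd K a = (\<lambda>\<tau>. u1 \<tau> + u2 \<tau>)" unfolding a_def bd_add a1(2) a2(2) by simp
  also have "\<dots> = z" unfolding u1_def u2_def z2_def by simp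
  finally show "z \<in> reduced_boundaries (K1 \<union> K2) j"
    unfolding reduced_boundaries_def using ac K_def by (metis image_eqI)
qed


lemma bits_exist: "\<exists>v::nat. v < 2 ^ n \<and> (\<forall>j<n. bit v j = f j)"
proof (induction n arbitrary: f)
  case 0 then show ?case by simp
next
  case (Suc n)
  obtain v :: nat where v: "v < 2 ^ n" "\<forall>j<n. bit v j = f (Suc j)" using Suc[of "\<lambda>j. f (Suc j)"] by blast
  define w where "w = of_bool (f 0) + 2 * v"
  have "w < 2 ^ Suc n" using v(1) unfolding w_def by (cases "f 0") auto
  moreover have "\<forall>j<Suc n. bit w j = f j"
  proof (intro allI impI)
    fix j assume "j < Suc n"
    then show "bit w j = f j" using v(2) unfolding w_def
      by (cases j) (auto simp: bit_Suc bit_0)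
  qed
  ultimately show ?case by blast
qed

definition cx :: "nat set set \<Rightarrow> nat set set" where
  "cx S = {\<sigma>. \<sigma> \<noteq> {} \<and> finite \<sigma> \<and> (\<exists>U\<in>S. \<sigma> \<subseteq> U)}"

lemma cx_cplx:
  assumes "finite S" "\<And>U. U \<in> S \<Longrightarrow> finite U"
  shows "cplx (cx S)"
proof (rule cplxI)
  have "cx S \<subseteq> (\<Union>U\<in>S. Pow U)" unfolding cx_def by blast
  moreover have "finite (\<Union>U\<in>S. Pow U)" using assms by simp
  ultimately show "finite (cx S)" by (rule finite_subset)
  show "\<And>\<sigma>. \<sigma> \<in> cx S \<Longrightarrow> \<sigma> \<noteq> {} \<and> finite \<sigma>" unfolding cx_def by blast
  fix \<sigma> \<tau> assume a: "\<sigma> \<in> cx S" "\<tau> \<subseteq> \<sigma>" "\<tau> \<noteq> {}"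
  then have "finite \<tau>" unfolding cx_def using finite_subset by blast
  then show "\<tau> \<in> cx S" using a unfolding cx_def by blast
qed

lemma cx_insert: "cx (insert U S) = cx S \<union> cx {U}"
  unfolding cx_def by auto
lemma cx_inter: "cx S \<inter> cx {V} = cx ((\<lambda>U. U \<inter> V) ` S)"
  unfolding cx_def by auto
lemma cx_cong: "T \<subseteq> S \<Longrightarrow> (\<And>U. U \<in> S \<Longrightarrow> U \<notin> T \<Longrightarrow> U = {}) \<Longrightarrow> cx S = cx T"
proof -
  assume a: "T \<subseteq> S" "\<And>U. U \<in> S \<Longrightarrow> U \<notin> T \<Longrightarrow> U = {}"
  show "cx S = cx T"
  proof (intro equalityI subsetI)
    fix \<sigma> assume "\<sigma> \<in> cx S"
    then obtain U where U: "\<sigma> \<noteq> {}" "finite \<sigma>" "U \<in> S" "\<sigma> \<subseteq> U" unfolding cx_def by blast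
    have "U \<in> T" using a(2)[OF U(3)] U(1,4) by blast
    then show "\<sigma> \<in> cx T" using U unfolding cx_def by blast
  next
    fix \<sigma> assume "\<sigma> \<in> cx T"
    then show "\<sigma> \<in> cx S" using a(1) unfolding cx_def by blast
  qed
qed
lemma cx_UN: "cx S = (\<Union>U\<in>S. cx {U})"
  unfolding cx_def by auto

definition acyc :: "nat set set \<Rightarrow> bool" where
  "acyc K \<longleftrightarrow> K \<noteq> {} \<and> (\<forall>j. ZB K j)"

lemma cone_acyc:
  assumes "finite U" "U \<noteq> {}"
  shows "acyc (cx {U})"
proof -
  have K: "cplx (cx {U})" using assms by (intro cx_cplx) auto
  define w where "w = Min U"
  have wU: "w \<in> U" unfolding w_def using assms by (rule Min_in)
  have cw: "insert w \<sigma> \<in> cx {U}" if "\<sigma> \<in> cx {U}" for \<sigma>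
    using that wU unfolding cx_def by blast
  have mw: "w \<le> z" if "\<sigma> \<in> cx {U}" "z \<in> \<sigma>" for \<sigma> z
  proof -
    have "z \<in> U" using that unfolding cx_def by blast
    then show ?thesis unfolding w_def using assms(1) by (simp add: Min_le)
  qed
  have "{w} \<in> cx {U}" using wU unfolding cx_def by blast
  moreover have "ZB (cx {U}) j" for j
    unfolding ZB_def
  proof
    fix c assume c: "c \<in> reduced_cycles (cx {U}) j"
    show "c \<in> reduced_boundaries (cx {U}) j"
      by (rule cone_ZB[of "cx {U}" w c j, OF K cw mw c])
  qed
  ultimately show ?thesis unfolding acyc_def by blast
qed

lemma MV_acyc:
  assumes "cplx K1" "cplx K2" "acyc K1" "acyc K2" "acyc (K1 \<inter> K2)"
  shows "acyc (K1 \<union> K2)"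
proof -
  have "ZB (K1 \<union> K2) j" for j
    by (rule MV) (use assms in \<open>auto simp: acyc_def\<close>)
  moreover have "K1 \<union> K2 \<noteq> {}" using assms(3) unfolding acyc_def by blast
  ultimately show ?thesis unfolding acyc_def by blast
qed

definition lits :: "(nat \<times> bool) set \<Rightarrow> (nat \<times> bool) set" where
  "lits G = {p. fst p < 4 \<and> fst p \<notin> fst ` G}"

definition consistent :: "(nat \<times> bool) set \<Rightarrow> bool" where
  "consistent G \<longleftrightarrow> inj_on fst G \<and> fst ` G \<subseteq> {..<4}"

definition fam :: "(nat \<times> bool) set \<Rightarrow> (nat \<times> bool) set \<Rightarrow> nat set set" where
  "fam G T = (\<lambda>p. subcube 4 (insert p G)) ` T"

definition free :: "(nat \<times> bool) set \<Rightarrow> nat set" where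
  "free G = {l. l < 4 \<and> l \<notin> fst ` G}"

lemma subcube_finite: "finite (subcube n F)"
proof -
  have "subcube n F \<subseteq> {..<2 ^ n}" unfolding subcube_def by auto
  then show ?thesis by (rule finite_subset) simp
qed

lemma subcube_Int: "subcube n (insert p G) \<inter> subcube n (insert F G) = subcube n (insert p (insert F G))"
  unfolding subcube_def by auto

lemma subcube_conflict: assumes "(l, e) \<in> H" "(l, \<not> e) \<in> H" shows "subcube n H = {}"
proof -
  have "v \<notin> subcube n H" for v
  proof
    assume "v \<in> subcube n H"
    then have "\<forall>(j, e) \<in> H. bit v j = e" unfolding subcube_def by blast
    then have "bit v l = e" "bit v l = (\<not> e)" using assms by auto
    then show False by simp
  qed
  then show ?thesis by blast
qed

lemma subcube_ne:
  assumes "consistent H"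
  shows "subcube 4 H \<noteq> {}"
proof -
  have inj: "inj_on fst H" and sub: "fst ` H \<subseteq> {..<4}" using assms unfolding consistent_def by simp_all
  obtain v :: nat where v: "v < 2 ^ 4" "\<forall>j<4. bit v j = ((j, True) \<in> H)"
    using bits_exist[of 4 "\<lambda>j. (j, True) \<in> H"] by blast
  have bv: "bit v j = e" if je: "(j, e) \<in> H" for j e
  proof -
    have "fst (j, e) \<in> fst ` H" using je by (rule imageI)
    then have j4: "j < 4" using sub by auto
    show "bit v j = e"
    proof (cases e)
      case True then show ?thesis using v(2) j4 je by simp
    next
      case False
      have "(j, True) \<notin> H"
      proof
        assume jt: "(j, True) \<in> H"
        have "fst (j, True) = fst (j, e)" by simp
        then have "(j, True) = (j, e)" using inj_onD[OF inj _ jt je] by blast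
        then show False using False by simp
      qed
      then show ?thesis using v(2) j4 False by simp
    qed
  qed
  have "v \<in> subcube 4 H" unfolding subcube_def using v(1) bv by auto
  then show ?thesis by blast
qed

lemma finite_lits: "finite (lits G)"
proof -
  have "lits G \<subseteq> {..<4} \<times> UNIV" unfolding lits_def by auto
  then show ?thesis by (rule finite_subset) simp
qed

lemma consistent_insert: "consistent G \<Longrightarrow> F \<in> lits G \<Longrightarrow> consistent (insert F G)"
  unfolding consistent_def lits_def by auto

lemma fam_cplx: "finite T \<Longrightarrow> cplx (cx (fam G T))"
  unfolding fam_def by (rule cx_cplx) (auto simp: subcube_finite)



lemma P_lemma:
  assumes "consistent G" "A \<in> lits G" "R \<subseteq> lits G - {(fst A, \<not> snd A)}"
  shows "acyc (cx (fam G (insert A R)))"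
  using assms
proof (induction "card (lits G)" arbitrary: G A R rule: less_induct)
  case less
  note cons = less.prems(1) and AG = less.prems(2)
  have finR: "finite R" using less.prems(3) finite_lits by (meson finite_Diff finite_subset)
  show ?case using finR less.prems(3)
  proof (induction R rule: finite_subset_induct')
    case empty
    have "fam G {A} = {subcube 4 (insert A G)}" unfolding fam_def by simp
    moreover have "subcube 4 (insert A G) \<noteq> {}" by (rule subcube_ne[OF consistent_insert[OF cons AG]])
    ultimately show ?case using cone_acyc[OF subcube_finite] by simp
  next
    case (insert F R)
    have hF: "F \<in> lits G" "F \<noteq> (fst A, \<not> snd A)" using insert.hyps(2) by auto
    have FnR: "F \<notin> R" using insert.hyps(4) .
    have Rsub: "R \<subseteq> lits G - {(fst A, \<not> snd A)}" using insert.hyps(3) .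
    have IH: "acyc (cx (fam G (insert A R)))" using insert(5) .
    show ?case
    proof (cases "F = A")
      case True then show ?thesis using IH by simp
    next
      case False
      define G' where "G' = insert F G"
      define V where "V = subcube 4 (insert F G)"
      have cons': "consistent G'" unfolding G'_def using cons hF(1) by (rule consistent_insert)
      have ins: "insert A (insert F R) = insert F (insert A R)" by blast
      have split: "cx (fam G (insert A (insert F R))) = cx (fam G (insert A R)) \<union> cx {V}"
        unfolding ins fam_def V_def image_insert by (rule cx_insert)
      have fstA: "fst A \<noteq> fst F"
      proof
        assume e: "fst A = fst F"
        have "F = (fst F, snd F)" by simp
        show False
        proof (cases "snd F = snd A")
          case True then have "F = A" using e by (simp add: prod_eq_iff)
          then show False using False by simp
        next
          case f: False then have "F = (fst A, \<not> snd A)" using e by (simp add: prod_eq_iff)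
          then show False using hF(2) by simp
        qed
      qed
      have int: "cx (fam G (insert A R)) \<inter> cx {V} = cx (fam G' (insert A (R \<inter> lits G')))"
      proof -
        have "cx (fam G (insert A R)) \<inter> cx {V} = cx ((\<lambda>U. U \<inter> V) ` fam G (insert A R))" by (rule cx_inter)
        also have "(\<lambda>U. U \<inter> V) ` fam G (insert A R) = fam G' (insert A R)"
          unfolding fam_def V_def G'_def image_image subcube_Int ..
        also have "cx (fam G' (insert A R)) = cx (fam G' (insert A (R \<inter> lits G')))"
        proof (rule cx_cong)
          show "fam G' (insert A (R \<inter> lits G')) \<subseteq> fam G' (insert A R)" unfolding fam_def by blast
          fix U assume U: "U \<in> fam G' (insert A R)" "U \<notin> fam G' (insert A (R \<inter> lits G'))"
          then obtain p where p: "p \<in> insert A R" "U = subcube 4 (insert p G')" unfolding fam_def by blast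
          have "p \<notin> insert A (R \<inter> lits G')" using U(2) p(2) unfolding fam_def by blast
          then have pR: "p \<in> R" "p \<notin> lits G'" using p(1) by auto
          have "p \<in> lits G" using pR(1) Rsub by blast
          then have "fst p = fst F" using pR(2) unfolding lits_def G'_def by auto
          moreover have "p \<noteq> F" using pR(1) FnR by blast
          ultimately have "p = (fst F, \<not> snd F)" by (cases p, cases F) auto
          then have "(fst F, \<not> snd F) \<in> insert p G'" "(fst F, snd F) \<in> insert p G'" unfolding G'_def by auto
          then show "U = {}" unfolding p(2) by (intro subcube_conflict[of "fst F" "snd F"]) simp_all
        qed
        finally show ?thesis .
      qed
      have acyc_int: "acyc (cx (fam G' (insert A (R \<inter> lits G'))))"
      proof (rule less.hyps)
        have "lits G' \<subseteq> lits G" unfolding lits_def G'_def by auto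
        moreover have "F \<in> lits G - lits G'" using hF(1) unfolding lits_def G'_def by auto
        ultimately have "lits G' \<subset> lits G" by blast
        then show "card (lits G') < card (lits G)" by (intro psubset_card_mono finite_lits)
        show "consistent G'" by (rule cons')
        show "A \<in> lits G'" using AG fstA unfolding lits_def G'_def by auto
        show "R \<inter> lits G' \<subseteq> lits G' - {(fst A, \<not> snd A)}" using Rsub by blast
      qed
      have "V \<noteq> {}" unfolding V_def by (rule subcube_ne[OF consistent_insert[OF cons hF(1)]])
      then have acV: "acyc (cx {V})" using cone_acyc[OF subcube_finite] unfolding V_def by blast
      have c1: "cplx (cx (fam G (insert A R)))" using insert.hyps(1) by (intro fam_cplx) simp
      have c2: "cplx (cx {V})" unfolding V_def by (rule cx_cplx) (auto simp: subcube_finite)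
      show ?thesis unfolding split by (rule MV_acyc[OF c1 c2 IH acV]) (simp only: int acyc_int)
    qed
  qed
qed


lemma lits_ins: "l \<in> free G \<Longrightarrow> lits (insert (l, False) G) = lits G - {(l, True), (l, False)}"
proof (intro equalityI subsetI)
  fix p assume "p \<in> lits (insert (l, False) G)"
  then show "p \<in> lits G - {(l, True), (l, False)}" unfolding lits_def by (cases p) auto
next
  fix p assume "l \<in> free G" "p \<in> lits G - {(l, True), (l, False)}"
  then show "p \<in> lits (insert (l, False) G)" unfolding lits_def by (cases p) auto
qed

lemma Q_step:
  assumes cons: "consistent G" and l: "l \<in> free G"
  shows "\<exists>K1 K2. cx (fam G (lits G)) = K1 \<union> K2 \<and> cplx K1 \<and> cplx K2 \<and> acyc K1 \<and> acyc K2
     \<and> K1 \<inter> K2 = cx (fam (insert (l, False) G) (lits (insert (l, False) G)))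
     \<and> consistent (insert (l, False) G) \<and> free (insert (l, False) G) = free G - {l}"
proof -
  define A where "A = (l, True)"
  define A' where "A' = (l, False)"
  define G' where "G' = insert A' G"
  define R where "R = lits G - {A, A'}"
  have AG: "A \<in> lits G" "A' \<in> lits G" using l unfolding A_def A'_def lits_def free_def by auto
  have litsG: "lits G = insert A' (insert A R)" using AG unfolding R_def by blast
  define V where "V = subcube 4 (insert A' G)"
  define K1 where "K1 = cx (fam G (insert A R))"
  define K2 where "K2 = cx {V}"
  have split: "cx (fam G (lits G)) = K1 \<union> K2"
  proof -
    have "cx (fam G (lits G)) = cx (insert V (fam G (insert A R)))"
      unfolding litsG fam_def V_def image_insert ..
    also have "\<dots> = K1 \<union> K2" unfolding K1_def K2_def by (rule cx_insert)
    finally show ?thesis .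
  qed
  have finR: "finite R" unfolding R_def using finite_lits by blast
  have c1: "cplx K1" unfolding K1_def using finR by (intro fam_cplx) simp
  have c2: "cplx K2" unfolding K2_def V_def by (rule cx_cplx) (auto simp: subcube_finite)
  have a1: "acyc K1" unfolding K1_def
    by (rule P_lemma[OF cons AG(1)]) (auto simp: R_def A_def A'_def)
  have cons': "consistent G'" unfolding G'_def using cons AG(2) by (rule consistent_insert)
  have "V \<noteq> {}" unfolding V_def by (rule subcube_ne[OF consistent_insert[OF cons AG(2)]])
  then have a2: "acyc K2" unfolding K2_def using cone_acyc[OF subcube_finite] unfolding V_def by blast
  have litsG': "lits G' = R" unfolding G'_def A'_def R_def A_def using l by (rule lits_ins)
  have int: "K1 \<inter> K2 = cx (fam G' (lits G'))"
  proof -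
    have "K1 \<inter> K2 = cx ((\<lambda>U. U \<inter> V) ` fam G (insert A R))" unfolding K1_def K2_def by (rule cx_inter)
    also have "(\<lambda>U. U \<inter> V) ` fam G (insert A R) = fam G' (insert A R)"
      unfolding fam_def V_def G'_def image_image subcube_Int ..
    also have "cx (fam G' (insert A R)) = cx (fam G' R)"
    proof (rule cx_cong)
      show "fam G' R \<subseteq> fam G' (insert A R)" unfolding fam_def by blast
      fix U assume U: "U \<in> fam G' (insert A R)" "U \<notin> fam G' R"
      then have "U = subcube 4 (insert A G')" unfolding fam_def by blast
      moreover have "(l, True) \<in> insert A G'" "(l, \<not> True) \<in> insert A G'" unfolding A_def G'_def A'_def by auto
      ultimately show "U = {}" using subcube_conflict by metis
    qed
    finally show ?thesis unfolding litsG' .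
  qed
  have fr: "free G' = free G - {l}" unfolding free_def G'_def A'_def by auto
  show ?thesis using split c1 c2 a1 a2 int cons' fr unfolding G'_def A'_def by blast
qed

lemma free_finite: "finite (free G)"
  unfolding free_def by simp

lemma Q_lemma:
  assumes "consistent G" "j + 2 \<le> card (free G)"
  shows "ZB (cx (fam G (lits G))) j"
  using assms
proof (induction j arbitrary: G)
  case 0
  then have "free G \<noteq> {}" by auto
  then obtain l where l: "l \<in> free G" by blast
  from Q_step[OF "0.prems"(1) l] obtain K1 K2 where K:
    "cx (fam G (lits G)) = K1 \<union> K2" "cplx K1" "cplx K2" "acyc K1" "acyc K2"
    "K1 \<inter> K2 = cx (fam (insert (l, False) G) (lits (insert (l, False) G)))"
    "consistent (insert (l, False) G)" "free (insert (l, False) G) = free G - {l}" by blast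
  define G' where "G' = insert (l, False) G"
  have "card (free G') \<ge> 1" unfolding G'_def K(8) using "0.prems"(2) l free_finite by simp
  then have "free G' \<noteq> {}" by auto
  then obtain l' where l': "l' \<in> free G'" by blast
  have pl: "(l', True) \<in> lits G'" using l' unfolding free_def lits_def by auto
  have "subcube 4 (insert (l', True) G') \<noteq> {}"
    by (rule subcube_ne[OF consistent_insert[OF K(7)[folded G'_def] pl]])
  then obtain v where "v \<in> subcube 4 (insert (l', True) G')" by blast
  then have "{v} \<in> cx (fam G' (lits G'))" using pl unfolding cx_def fam_def by blast
  then have ne: "K1 \<inter> K2 \<noteq> {}" unfolding K(6) G'_def by blast
  show ?case unfolding K(1)
    by (rule MV) (use K ne in \<open>auto simp: acyc_def\<close>)
next
  case (Suc i)
  then have "free G \<noteq> {}" by auto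
  then obtain l where l: "l \<in> free G" by blast
  from Q_step[OF Suc.prems(1) l] obtain K1 K2 where K:
    "cx (fam G (lits G)) = K1 \<union> K2" "cplx K1" "cplx K2" "acyc K1" "acyc K2"
    "K1 \<inter> K2 = cx (fam (insert (l, False) G) (lits (insert (l, False) G)))"
    "consistent (insert (l, False) G)" "free (insert (l, False) G) = free G - {l}" by blast
  have "i + 2 \<le> card (free (insert (l, False) G))" unfolding K(8) using Suc.prems(2) l free_finite by simp
  then have zi: "ZB (K1 \<inter> K2) i" unfolding K(6) using Suc.IH K(7) by blast
  show ?case unfolding K(1)
    by (rule MV) (use K zi in \<open>auto simp: acyc_def\<close>)
qed


lemma VR_single:
  assumes "fst p < 4"
  shows "VR 4 3 (subcube 4 {p}) = cx {subcube 4 {p}}"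
proof -
  obtain l e where p: "p = (l, e)" by (cases p)
  have l4: "l < 4" using assms p by simp
  have ham: "hamming 4 a b \<le> 3" if "a \<in> subcube 4 {p}" "b \<in> subcube 4 {p}" for a b
  proof -
    have "bit a l = e" "bit b l = e" using that unfolding subcube_def p by auto
    then have "{j. j < 4 \<and> bit a j \<noteq> bit b j} \<subseteq> {..<4} - {l}" by auto
    then have "card {j. j < 4 \<and> bit a j \<noteq> bit b j} \<le> card ({..<4::nat} - {l})"
      by (intro card_mono) auto
    also have "\<dots> = 3" using l4 by simp
    finally show ?thesis unfolding hamming_def .
  qed
  show ?thesis
  proof (intro equalityI subsetI)
    fix \<sigma> assume "\<sigma> \<in> VR 4 3 (subcube 4 {p})"
    then show "\<sigma> \<in> cx {subcube 4 {p}}" unfolding VR_def cx_def by blast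
  next
    fix \<sigma> assume s: "\<sigma> \<in> cx {subcube 4 {p}}"
    then have "\<sigma> \<noteq> {}" "finite \<sigma>" "\<sigma> \<subseteq> subcube 4 {p}" unfolding cx_def by auto
    then show "\<sigma> \<in> VR 4 3 (subcube 4 {p})" unfolding VR_def using ham by blast
  qed
qed

lemma cx_fam_empty: "cx (fam {} T) = (\<Union>p\<in>T. cx {subcube 4 {p}})"
  unfolding fam_def by (subst cx_UN) simp

theorem mainTheorem17:
  fixes X :: "nat set set" and j :: nat
  assumes "X \<in> W 4 3" and "j \<le> 2"
  shows "reduced_homology_vanishes X j"
proof -
  have "\<exists>S. finite S \<and> S \<noteq> {} \<and> (\<forall>F\<in>S. cube_spec 4 3 F)
     \<and> X = (\<Union>F\<in>S. VR 4 3 (subcube 4 F))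
     \<and> ((3::nat) \<noteq> 4 \<longrightarrow> (\<exists>G. cube_spec 4 (3 + 1) G \<and> X \<subseteq> VR 4 3 (subcube 4 G) \<and> (X \<noteq> cube_boundary 4 G \<longrightarrow>
               (\<exists>l e. l < 4 \<and> l \<notin> fst ` G
                  \<and> VR 4 3 (subcube 4 (insert (l, e) G)) \<subseteq> X
                  \<and> \<not> VR 4 3 (subcube 4 (insert (l, \<not> e) G)) \<subseteq> X))))"
    using assms(1) unfolding W_def mem_Collect_eq .
  then obtain S where S: "finite S" "S \<noteq> {}" "\<forall>F\<in>S. cube_spec 4 3 F"
    "X = (\<Union>F\<in>S. VR 4 3 (subcube 4 F))"
    and G: "(3::nat) \<noteq> 4 \<longrightarrow> (\<exists>G. cube_spec 4 (3 + 1) G \<and> X \<subseteq> VR 4 3 (subcube 4 G) \<and> (X \<noteq> cube_boundary 4 G \<longrightarrow>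
               (\<exists>l e. l < 4 \<and> l \<notin> fst ` G
                  \<and> VR 4 3 (subcube 4 (insert (l, e) G)) \<subseteq> X
                  \<and> \<not> VR 4 3 (subcube 4 (insert (l, \<not> e) G)) \<subseteq> X)))"
    by (elim exE conjE) (rule that)
  from G obtain G where G1: "cube_spec 4 4 G" and
    G2: "X \<noteq> cube_boundary 4 G \<longrightarrow>
               (\<exists>l e. l < 4 \<and> l \<notin> fst ` G
                  \<and> VR 4 3 (subcube 4 (insert (l, e) G)) \<subseteq> X
                  \<and> \<not> VR 4 3 (subcube 4 (insert (l, \<not> e) G)) \<subseteq> X)"
    by (auto simp only: numeral_eq_iff semiring_norm simp_thms one_plus_numeral)
  have G0: "G = {}" using G1 unfolding cube_spec_def by (metis card_eq_0_iff diff_self_eq_0)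
  define T where "T = {p. {p} \<in> S}"
  have single: "\<exists>p. F = {p} \<and> fst p < 4" if "F \<in> S" for F
  proof -
    have c: "card F = 1" "fst ` F \<subseteq> {..<4}" using S(3) that unfolding cube_spec_def by simp_all
    then obtain p where "F = {p}" using card_1_singletonE by blast
    then show ?thesis using c(2) by simp
  qed
  have ST: "S = (\<lambda>p. {p}) ` T"
  proof (intro equalityI subsetI)
    fix F assume "F \<in> S"
    then obtain p where "F = {p}" using single by blast
    then show "F \<in> (\<lambda>p. {p}) ` T" using \<open>F \<in> S\<close> unfolding T_def by blast
  next
    fix F assume "F \<in> (\<lambda>p. {p}) ` T" then show "F \<in> S" unfolding T_def by blast
  qed
  have Tl: "T \<subseteq> lits {}"
  proof
    fix p assume "p \<in> T"
    then have "{p} \<in> S" unfolding T_def by blast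
    then obtain q where "{p} = {q}" "fst q < 4" using single by blast
    then show "p \<in> lits {}" unfolding lits_def by simp
  qed
  have finT: "finite T" by (rule finite_subset[OF Tl finite_lits])
  have X_eq: "X = cx (fam {} T)"
  proof -
    have "X = (\<Union>p\<in>T. VR 4 3 (subcube 4 {p}))" unfolding S(4) ST by simp
    also have "\<dots> = (\<Union>p\<in>T. cx {subcube 4 {p}})"
    proof -
      have eqf: "VR 4 3 (subcube 4 {p}) = cx {subcube 4 {p}}" if "p \<in> T" for p
      proof -
        have "fst p < 4" using Tl that unfolding lits_def by blast
        then show ?thesis by (rule VR_single)
      qed
      have "(\<lambda>p. VR 4 3 (subcube 4 {p})) ` T = (\<lambda>p. cx {subcube 4 {p}}) ` T"
        by (rule image_cong[OF refl eqf])
      then show ?thesis by (rule arg_cong)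
    qed
    finally show ?thesis unfolding cx_fam_empty .
  qed
  have cX: "cplx X" unfolding X_eq using finT by (rule fam_cplx)
  have "ZB X j"
  proof (cases "X = cube_boundary 4 {}")
    case True
    have bs: "{VR 4 3 (subcube 4 (insert (l, e) {})) | l e. l < 4 \<and> l \<notin> fst ` {}}
        = (\<lambda>p. VR 4 3 (subcube 4 {p})) ` lits {}"
    proof (intro equalityI subsetI)
      fix x assume "x \<in> {VR 4 3 (subcube 4 (insert (l, e) {})) | l e. l < 4 \<and> l \<notin> fst ` {}}"
      then obtain l e where x: "x = VR 4 3 (subcube 4 {(l, e)})" "l < 4" by blast
      then have "(l, e) \<in> lits {}" unfolding lits_def by simp
      then show "x \<in> (\<lambda>p. VR 4 3 (subcube 4 {p})) ` lits {}" using x(1) by (rule rev_image_eqI)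
    next
      fix x assume "x \<in> (\<lambda>p. VR 4 3 (subcube 4 {p})) ` lits {}"
      then obtain p where p: "p \<in> lits {}" "x = VR 4 3 (subcube 4 {p})" by blast
      obtain l e where "p = (l, e)" by (cases p)
      then have "x = VR 4 3 (subcube 4 (insert (l, e) {}))" "l < 4 \<and> l \<notin> fst ` {}"
        using p unfolding lits_def by simp_all
      then show "x \<in> {VR 4 3 (subcube 4 (insert (l, e) {})) | l e. l < 4 \<and> l \<notin> fst ` {}}" by blast
    qed
    have "cube_boundary 4 {} = (\<Union>p\<in>lits {}. VR 4 3 (subcube 4 {p}))"
      unfolding cube_boundary_def bs by (rule refl)
    also have "\<dots> = (\<Union>p\<in>lits {}. cx {subcube 4 {p}})"
    proof -
      have eqf: "VR 4 3 (subcube 4 {p}) = cx {subcube 4 {p}}" if "p \<in> lits {}" for p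
      proof -
        have "fst p < 4" using that unfolding lits_def by blast
        then show ?thesis by (rule VR_single)
      qed
      have "(\<lambda>p. VR 4 3 (subcube 4 {p})) ` lits {} = (\<lambda>p. cx {subcube 4 {p}}) ` lits {}"
        by (rule image_cong[OF refl eqf])
      then show ?thesis by (rule arg_cong)
    qed
    finally have cb: "cube_boundary 4 {} = (\<Union>p\<in>lits {}. cx {subcube 4 {p}})" .
    have "X = cx (fam {} (lits {}))" unfolding cx_fam_empty using True cb by (rule HOL.trans)
    moreover have "ZB (cx (fam {} (lits {}))) j"
    proof (rule Q_lemma)
      show "consistent {}" unfolding consistent_def by simp
      have "free {} = {..<4}" unfolding free_def by auto
      then show "j + 2 \<le> card (free {})" using assms(2) by simp
    qed
    ultimately show ?thesis by simp
  next
    case False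
    have "\<exists>l e. l < 4 \<and> l \<notin> fst ` G
                  \<and> VR 4 3 (subcube 4 (insert (l, e) G)) \<subseteq> X
                  \<and> \<not> VR 4 3 (subcube 4 (insert (l, \<not> e) G)) \<subseteq> X"
      using G2 False G0 by blast
    then obtain l e where le: "l < 4" "VR 4 3 (subcube 4 {(l, e)}) \<subseteq> X"
      "\<not> VR 4 3 (subcube 4 {(l, \<not> e)}) \<subseteq> X" unfolding G0 by blast
    have v1: "VR 4 3 (subcube 4 {(l, e)}) = cx {subcube 4 {(l, e)}}" using le(1) by (intro VR_single) simp
    have v2: "VR 4 3 (subcube 4 {(l, \<not> e)}) = cx {subcube 4 {(l, \<not> e)}}" using le(1) by (intro VR_single) simp
    have A1: "cx {subcube 4 {(l, e)}} \<subseteq> X" using le(2) unfolding v1 .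
    have A2: "\<not> cx {subcube 4 {(l, \<not> e)}} \<subseteq> X" using le(3) unfolding v2 .
    have "X = cx (fam {} (insert (l, e) T))"
    proof -
      have fi: "fam {} (insert (l, e) T) = insert (subcube 4 {(l, e)}) (fam {} T)"
        unfolding fam_def by simp
      have "cx (fam {} (insert (l, e) T)) = X \<union> cx {subcube 4 {(l, e)}}"
        unfolding fi X_eq by (rule cx_insert)
      then show ?thesis using A1 by blast
    qed
    moreover have "(l, \<not> e) \<notin> T"
    proof
      assume "(l, \<not> e) \<in> T"
      then have "cx {subcube 4 {(l, \<not> e)}} \<subseteq> X" unfolding X_eq cx_fam_empty by blast
      then show False using A2 by blast
    qed
    moreover have "acyc (cx (fam {} (insert (l, e) T)))"
    proof (rule P_lemma)
      show "consistent {}" unfolding consistent_def by simp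
      show "(l, e) \<in> lits {}" using le(1) unfolding lits_def by simp
      show "T \<subseteq> lits {} - {(fst (l, e), \<not> snd (l, e))}" using Tl calculation(2) by auto
    qed
    ultimately show ?thesis unfolding acyc_def by simp
  qed
  then show ?thesis using cX by (rule rhv_ZB[rotated])
qed

end
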